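(* Let $\gamma(z)=\sum_{n=1}^{\infty} z^{n-1}\left(\frac{1}{n}-\log\frac{n+1}{n}\right)$ for $|z|\le 1$. If $|z|\le 1$, then $$\gamma(z)=\int_0^1\int_0^1\frac{1-x}{(1-xyz)(-\log xy)}\,dx\,dy=\int_0^1\frac{1-x+\log x}{(1-xz)\log x}\,dx.$$ Both integrals converge for all $z\in\mathbb{C}\setminus(1,\infty)$, and they provide the analytic continuation of $\gamma(z)$ to $z\in\mathbb{C}\setminus[1,\infty)$.
   Context: Here $\log$ denotes the natural logarithm (for $z\ne0$, the principal branch $\log z=\ln|z|+i\,\mathrm{Arg}\,z$, $-\pi<\mathrm{Arg}\,z\le\pi$). *)

theory Defs
  imports "HOL-Complex_Analysis.Complex_Analysis"
begin

definition gamma_term :: "complex \<Rightarrow> nat \<Rightarrow> complex" where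
  "gamma_term z n = z ^ (n - 1) * of_real (1 / real n - ln (real (n + 1) / real n))"

definition gen_gamma :: "complex \<Rightarrow> complex" where
  "gen_gamma z = (\<Sum>n. gamma_term z (Suc n))"

definition dbl_integrand :: "complex \<Rightarrow> real \<times> real \<Rightarrow> complex" where
  "dbl_integrand z p = (case p of (x, y) \<Rightarrow>
     of_real (1 - x) / ((1 - of_real (x * y) * z) * of_real (- ln (x * y))))"

definition sgl_integrand :: "complex \<Rightarrow> real \<Rightarrow> complex" where
  "sgl_integrand z x = of_real (1 - x + ln x) / ((1 - of_real x * z) * of_real (ln x))"

definition dbl_integral :: "complex \<Rightarrow> complex" where
  "dbl_integral z = set_lebesgue_integral lborel ({0..1} \<times> {0..1}) (dbl_integrand z)"

definition sgl_integral :: "complex \<Rightarrow> complex" where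
  "sgl_integral z = set_lebesgue_integral lborel {0..1} (sgl_integrand z)"

end

theory Submission
  imports Defs "HOL-Real_Asymp.Real_Asymp"
begin

lemma nn_FTC_open:
  fixes f F :: "real \<Rightarrow> real" and a b A B :: real
  assumes ab: "a < b"
  assumes F: "\<And>x. a < x \<Longrightarrow> x < b \<Longrightarrow> DERIV F x :> f x"
  assumes f: "\<And>x. a < x \<Longrightarrow> x < b \<Longrightarrow> isCont f x"
  assumes nn: "\<And>x. a < x \<Longrightarrow> x < b \<Longrightarrow> 0 \<le> f x"
  assumes A: "(F \<longlongrightarrow> A) (at_right a)"
  assumes B: "(F \<longlongrightarrow> B) (at_left b)"
  shows "(\<integral>\<^sup>+x. ennreal (f x * indicator {a<..<b} x) \<partial>lborel) = ennreal (B - A)"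
proof -
  have "ereal a < ereal b" using ab by simp
  note r = interval_integral_FTC_nonneg[OF this, of F f A B]
  have i: "set_integrable lborel {a<..<b} f" and e: "(LBINT x=ereal a..ereal b. f x) = B - A"
    using r F f nn A B by (auto simp: ereal_tendsto_simps1)
  have "(\<integral>\<^sup>+x. ennreal (f x * indicator {a<..<b} x) \<partial>lborel) = ennreal (LINT x|lborel. f x * indicator {a<..<b} x)"
    apply (rule nn_integral_eq_integral)
    using i apply (simp add: set_integrable_def mult.commute)
    using nn by (auto split: split_indicator)
  also have "(LINT x|lborel. f x * indicator {a<..<b} x) = B - A"
    using e ab by (simp add: interval_lebesgue_integral_def set_lebesgue_integral_def mult.commute)
  finally show ?thesis .
qed

lemma powr_tendsto_zero_at_top:
  fixes u :: real assumes "0 < u" "u < 1"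
  shows "((\<lambda>s. u powr s) \<longlongrightarrow> 0) at_top"
proof -
  have "ln u < 0" using assms by simp
  then have "filterlim (\<lambda>s. ln u * s) at_bot at_top"
    by (rule filterlim_tendsto_neg_mult_at_bot[OF tendsto_const _ filterlim_ident])
  then have "((\<lambda>s. exp (ln u * s)) \<longlongrightarrow> 0) at_top"
    by (rule filterlim_compose[OF exp_at_bot])
  then show ?thesis using assms by (simp add: powr_def mult.commute)
qed

lemma inv_neg_ln_nn:
  fixes u :: real assumes "0 < u" "u < 1"
  shows "(\<integral>\<^sup>+s. ennreal (u powr s) * indicator {0..} s \<partial>lborel) = ennreal (1 / (- ln u))"
proof -
  have "ln u < 0" using assms by simp
  have "(\<integral>\<^sup>+s. ennreal (u powr s) * indicator {0..} s \<partial>lborel) = 0 - (u powr 0 / ln u)"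
  proof (rule nn_integral_FTC_atLeast[where F="\<lambda>s. u powr s / ln u"])
    show "(\<lambda>s. u powr s) \<in> borel_measurable borel" by measurable
    show "DERIV (\<lambda>s. u powr s / ln u) x :> u powr x" for x
      using assms \<open>ln u < 0\<close> by (auto intro!: derivative_eq_intros)
    show "((\<lambda>s. u powr s / ln u) \<longlongrightarrow> 0) at_top"
      using tendsto_divide[OF powr_tendsto_zero_at_top[OF assms] tendsto_const, of "ln u"] \<open>ln u < 0\<close> by simp
  qed simp
  then show ?thesis using assms by simp
qed

lemma DERIV_powr_pos:
  fixes x r :: real assumes "0 < x" and that: "r + 1 \<noteq> 0"
  shows "DERIV (\<lambda>x. x powr (r + 1) / (r + 1)) x :> x powr r"
proof -
  have "DERIV (\<lambda>x. x powr (r + 1)) x :> (r + 1) * x powr (r + 1 - 1)"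
    using assms by (intro has_real_derivative_powr) auto
  then have "DERIV (\<lambda>x. x powr (r + 1) / (r + 1)) x :> (r + 1) * x powr (r + 1 - 1) / (r + 1)"
    by (intro DERIV_cdivide)
  then show ?thesis using that by simp
qed

lemma lim_powr_at_right0:
  fixes q :: real assumes "0 < q"
  shows "((\<lambda>x. x powr q) \<longlongrightarrow> 0) (at_right 0)"
  by (rule tendsto_zero_powrI[of "\<lambda>x. x" _ "\<lambda>_. q" q]) (auto intro!: tendsto_ident_at assms eventually_at_rightI[of 0 1])

lemma lim_powr_at_left1:
  fixes q :: real
  shows "((\<lambda>x. x powr q) \<longlongrightarrow> 1) (at_left 1)"
proof -
  have "isCont (\<lambda>x. x powr q) 1" by (intro continuous_intros) auto
  then have "((\<lambda>x. x powr q) \<longlongrightarrow> 1 powr q) (at 1)" by (simp add: isCont_def)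
  then show ?thesis by (simp add: tendsto_at_iff_sequentially filterlim_at_split)
qed

lemma ind01_AE: "AE x in lborel. indicator {0..1::real} x = (indicator {0<..<1} x :: real)"
proof -
  have "AE x in lborel. x \<noteq> (0::real)" by (rule AE_lborel_singleton)
  moreover have "AE x in lborel. x \<noteq> (1::real)" by (rule AE_lborel_singleton)
  ultimately show ?thesis by eventually_elim (auto split: split_indicator)
qed

lemma powr_moment:
  fixes p :: real assumes "0 \<le> p"
  shows "(\<integral>\<^sup>+x. ennreal (x powr p * indicator {0..1} x) \<partial>lborel) = ennreal (1 / (p + 1))"
proof -
  have "(\<integral>\<^sup>+x. ennreal (x powr p * indicator {0..1} x) \<partial>lborel) =
        (\<integral>\<^sup>+x. ennreal (x powr p * indicator {0<..<1} x) \<partial>lborel)"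
    by (rule nn_integral_cong_AE) (use ind01_AE in eventually_elim, auto)
  also have "\<dots> = ennreal (1 / (p + 1) - 0)"
  proof (rule nn_FTC_open[where F="\<lambda>x. x powr (p + 1) / (p + 1)"])
    show "DERIV (\<lambda>x. x powr (p + 1) / (p + 1)) x :> x powr p" if "0 < x" for x
      using DERIV_powr_pos[OF that, of p] assms by simp
    show "isCont (\<lambda>x. x powr p) x" if "0 < x" for x using that by (intro continuous_intros) auto
    show "((\<lambda>x. x powr (p + 1) / (p + 1)) \<longlongrightarrow> 0) (at_right 0)"
      using tendsto_divide[OF lim_powr_at_right0[of "p+1"] tendsto_const, of "p+1"] assms by simp
    show "((\<lambda>x. x powr (p + 1) / (p + 1)) \<longlongrightarrow> 1 / (p + 1)) (at_left 1)"
      using tendsto_divide[OF lim_powr_at_left1[of "p+1"] tendsto_const, of "p+1"] assms by simp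
  qed auto
  finally show ?thesis by simp
qed

lemma powr_moment1:
  fixes p :: real assumes "0 \<le> p"
  shows "(\<integral>\<^sup>+x. ennreal (x powr p * (1 - x) * indicator {0..1} x) \<partial>lborel) = ennreal (1 / (p + 1) - 1 / (p + 2))"
proof -
  have "(\<integral>\<^sup>+x. ennreal (x powr p * (1 - x) * indicator {0..1} x) \<partial>lborel) =
        (\<integral>\<^sup>+x. ennreal ((x powr p - x powr (p + 1)) * indicator {0<..<1} x) \<partial>lborel)"
    by (rule nn_integral_cong_AE) (use ind01_AE in eventually_elim, auto simp: powr_add algebra_simps split: split_indicator)
  also have "\<dots> = ennreal ((1 / (p + 1) - 1 / (p + 2)) - 0)"
  proof (rule nn_FTC_open[where F="\<lambda>x. x powr (p + 1) / (p + 1) - x powr ((p + 1) + 1) / ((p + 1) + 1)"])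
    show "DERIV (\<lambda>x. x powr (p + 1) / (p + 1) - x powr ((p + 1) + 1) / ((p + 1) + 1)) x :> x powr p - x powr (p + 1)" if "0 < x" for x
      using DERIV_powr_pos[OF that, of p] DERIV_powr_pos[OF that, of "p + 1"] assms
      by (intro DERIV_diff) auto
    show "isCont (\<lambda>x. x powr p - x powr (p + 1)) x" if "0 < x" for x using that by (intro continuous_intros) auto
    show "0 \<le> x powr p - x powr (p + 1)" if "0 < x" "x < 1" for x
      using that by (simp add: powr_add mult_left_le)
    show "((\<lambda>x. x powr (p + 1) / (p + 1) - x powr ((p + 1) + 1) / ((p + 1) + 1)) \<longlongrightarrow> 0) (at_right 0)"
      using tendsto_diff[OF tendsto_divide[OF lim_powr_at_right0[of "p+1"] tendsto_const, of "p+1"]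
         tendsto_divide[OF lim_powr_at_right0[of "p+1+1"] tendsto_const, of "p+1+1"]] assms by simp
    show "((\<lambda>x. x powr (p + 1) / (p + 1) - x powr ((p + 1) + 1) / ((p + 1) + 1)) \<longlongrightarrow> 1 / (p + 1) - 1 / (p + 2)) (at_left 1)"
      using tendsto_diff[OF tendsto_divide[OF lim_powr_at_left1[of "p+1"] tendsto_const, of "p+1"]
         tendsto_divide[OF lim_powr_at_left1[of "p+1+1"] tendsto_const, of "p+1+1"]] assms
      by (simp add: add.assoc)
  qed auto
  finally show ?thesis by simp
qed

lemma inv_neg_ln_gen:
  fixes u c :: real
  assumes "0 \<le> u" "u \<le> 1" "0 \<le> c" "u = 1 \<Longrightarrow> c = 0"
  shows "ennreal (c / (- ln u)) = (\<integral>\<^sup>+s. ennreal (c * u powr s) * indicator {0..} s \<partial>lborel)"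
proof (cases "u = 0 \<or> u = 1")
  case True
  then show ?thesis using assms by auto
next
  case False
  then have u: "0 < u" "u < 1" using assms by auto
  have "(\<integral>\<^sup>+s. ennreal (c * u powr s) * indicator {0..} s \<partial>lborel)
       = (\<integral>\<^sup>+s. ennreal c * (ennreal (u powr s) * indicator {0..} s) \<partial>lborel)"
    using assms by (intro nn_integral_cong) (simp add: ennreal_mult mult.assoc)
  also have "\<dots> = ennreal c * ennreal (1 / (- ln u))"
    by (subst nn_integral_cmult) (auto simp: inv_neg_ln_nn[OF u])
  also have "\<dots> = ennreal (c / (- ln u))"
    using u assms by (simp add: ennreal_mult[symmetric] divide_simps)
  finally show ?thesis ..
qed

lemma pow_powr_comb:
  fixes x s :: real assumes "0 \<le> x"
  shows "x ^ n * x powr s = x powr (real n + s)"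
  using assms by (cases "x = 0") (auto simp: powr_add powr_realpow)

lemma lim_lndiff: "((\<lambda>s. ln (s + c) - ln (s + c + 1)) \<longlongrightarrow> (0::real)) at_top" if "c > 0" for c :: real
  using that by real_asymp

lemma sgl_moment_aux:
  fixes n :: nat
  shows "(\<integral>\<^sup>+x. ennreal (x ^ n * (1 - x) / (- ln x) * indicator {0..1} x) \<partial>lborel)
         = ennreal (ln ((real n + 2) / (real n + 1)))"
proof -
  let ?g = "\<lambda>x s. ennreal (x ^ n * (1 - x) * x powr s * indicator {0..1} x) * indicator {0..} s"
  have "(\<integral>\<^sup>+x. ennreal (x ^ n * (1 - x) / (- ln x) * indicator {0..1} x) \<partial>lborel)
      = (\<integral>\<^sup>+x. (\<integral>\<^sup>+s. ?g x s \<partial>lborel) \<partial>lborel)"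
  proof (intro nn_integral_cong)
    fix x :: real
    show "ennreal (x ^ n * (1 - x) / (- ln x) * indicator {0..1} x) = (\<integral>\<^sup>+s. ?g x s \<partial>lborel)"
    proof (cases "x \<in> {0..1}")
      case True
      then show ?thesis using inv_neg_ln_gen[of x "x ^ n * (1 - x)"] by auto
    next
      case False
      then show ?thesis by simp
    qed
  qed
  also have "\<dots> = (\<integral>\<^sup>+s. (\<integral>\<^sup>+x. ?g x s \<partial>lborel) \<partial>lborel)"
    by (rule lborel_pair.Fubini'[symmetric]) measurable
  also have "\<dots> = (\<integral>\<^sup>+s. ennreal (1 / (real n + s + 1) - 1 / (real n + s + 2)) * indicator {0..} s \<partial>lborel)"
  proof (intro nn_integral_cong)
    fix s :: real
    show "(\<integral>\<^sup>+x. ?g x s \<partial>lborel) = ennreal (1 / (real n + s + 1) - 1 / (real n + s + 2)) * indicator {0..} s"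
    proof (cases "0 \<le> s")
      case True
      have "(\<integral>\<^sup>+x. ?g x s \<partial>lborel) = (\<integral>\<^sup>+x. ennreal (x powr (real n + s) * (1 - x) * indicator {0..1} x) \<partial>lborel)"
      proof (intro nn_integral_cong)
        fix x :: real
        have e: "x ^ n * (1 - x) * x powr s = x powr (real n + s) * (1 - x)" if "0 \<le> x"
          using pow_powr_comb[OF that, of n s] by (simp add: algebra_simps)
        show "?g x s = ennreal (x powr (real n + s) * (1 - x) * indicator {0..1} x)"
          using True e by (auto split: split_indicator)
      qed
      also have "\<dots> = ennreal (1 / (real n + s + 1) - 1 / (real n + s + 2))"
        using True by (subst powr_moment1) (auto simp: add_ac)
      finally show ?thesis using True by simp
    next
      case False
      then show ?thesis by simp
    qed
  qed
  also have "\<dots> = ennreal (0 - (ln (0 + (real n + 1)) - ln (0 + (real n + 1) + 1)))"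
  proof (rule nn_integral_FTC_atLeast[where F="\<lambda>s. ln (s + (real n + 1)) - ln (s + (real n + 1) + 1)"])
    show "(\<lambda>s. 1 / (real n + s + 1) - 1 / (real n + s + 2)) \<in> borel_measurable borel" by measurable
    show "DERIV (\<lambda>s. ln (s + (real n + 1)) - ln (s + (real n + 1) + 1)) x :> 1 / (real n + x + 1) - 1 / (real n + x + 2)"
      if "0 \<le> x" for x
      using that by (auto intro!: derivative_eq_intros simp: field_simps)
    show "0 \<le> 1 / (real n + x + 1) - 1 / (real n + x + 2)" if "0 \<le> x" for x
      using that by (simp add: field_simps)
    show "((\<lambda>s. ln (s + (real n + 1)) - ln (s + (real n + 1) + 1)) \<longlongrightarrow> 0) at_top"
      by (rule lim_lndiff) simp
  qed
  also have "\<dots> = ennreal (ln ((real n + 2) / (real n + 1)))"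
    by (simp add: ln_div add_ac)
  finally show ?thesis .
qed

lemma lim_dbl: "((\<lambda>s. - (1 / (s + c)) - ln (s + c) + ln (s + c + 1)) \<longlongrightarrow> (0::real)) at_top" if "c > 0" for c :: real
  using that by real_asymp

lemma dbl_deriv:
  fixes c x :: real assumes "0 < c" "0 \<le> x"
  shows "DERIV (\<lambda>s. - (1 / (s + c)) - ln (s + c) + ln (s + c + 1)) x :> (1 / (x + c) - 1 / (x + c + 1)) * (1 / (x + c))"
proof -
  have y: "0 < x + c" using assms by linarith
  have "DERIV (\<lambda>y. - (1 / y) - ln y + ln (y + 1)) (x + c) :> (1 / (x + c) - 1 / (x + c + 1)) * (1 / (x + c))"
  proof -
    have *: "DERIV (\<lambda>y. - (1 / y) - ln y + ln (y + 1)) y :> (1 / y - 1 / (y + 1)) * (1 / y)" if "0 < y" for y :: real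
    proof -
      have h: "y \<noteq> 0" "y + 1 \<noteq> 0" "1 + y \<noteq> 0" using that by (linarith, linarith, linarith)
      show ?thesis using that h by (auto intro!: derivative_eq_intros simp: field_simps power2_eq_square)
    qed
    show ?thesis by (rule *[OF y])
  qed
  then show ?thesis by (subst (asm) DERIV_shift) simp
qed

lemma dbl_moment_aux:
  fixes n :: nat
  shows "(\<integral>\<^sup>+p. ennreal ((1 - fst p) / (- ln (fst p * snd p)) * (fst p * snd p) ^ n * indicator ({0..1} \<times> {0..1}) p) \<partial>lborel)
         = ennreal (1 / (real n + 1) - ln ((real n + 2) / (real n + 1)))"
proof -
  define f where "f = (\<lambda>p::real\<times>real. ennreal ((1 - fst p) / (- ln (fst p * snd p)) * (fst p * snd p) ^ n * indicator ({0..1} \<times> {0..1}) p))"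
  define A where "A = (\<lambda>x s. ennreal ((1 - x) * x powr (real n + s) * indicator {0..1} x))"
  define B where "B = (\<lambda>y s. ennreal (y powr (real n + s) * indicator {0..1} y))"
  let ?G = "\<lambda>x y s. A x s * B y s * indicator {0..} s"
  have fm: "f \<in> borel_measurable (lborel \<Otimes>\<^sub>M lborel)" unfolding f_def by measurable
  have Am: "case_prod A \<in> borel_measurable (lborel \<Otimes>\<^sub>M lborel)" unfolding A_def by measurable
  have Bm: "case_prod B \<in> borel_measurable (lborel \<Otimes>\<^sub>M lborel)" unfolding B_def by measurable
  have "(\<integral>\<^sup>+p. f p \<partial>lborel) = (\<integral>\<^sup>+p. f p \<partial>(lborel \<Otimes>\<^sub>M lborel))"
    by (simp add: lborel_prod)
  also have "\<dots> = (\<integral>\<^sup>+x. \<integral>\<^sup>+y. f (x, y) \<partial>lborel \<partial>lborel)"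
    by (rule lborel.nn_integral_fst[OF fm, symmetric])
  also have "\<dots> = (\<integral>\<^sup>+x. \<integral>\<^sup>+y. \<integral>\<^sup>+s. ?G x y s \<partial>lborel \<partial>lborel \<partial>lborel)"
  proof (intro nn_integral_cong)
    fix x y :: real
    show "f (x, y) = (\<integral>\<^sup>+s. ?G x y s \<partial>lborel)"
    proof (cases "x \<in> {0..1} \<and> y \<in> {0..1}")
      case True
      then have xy: "0 \<le> x * y" "x * y \<le> 1" by (auto intro: mult_le_one)
      have x1: "x * y = 1 \<Longrightarrow> x = 1" using True
        by (metis atLeastAtMost_iff mult.commute mult_le_one order_antisym_conv mult_right_le_one_le xy(1))
      have "f (x, y) = ennreal ((1 - x) * (x * y) ^ n / (- ln (x * y)))"
        using True by (simp add: f_def)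
      also have "\<dots> = (\<integral>\<^sup>+s. ennreal ((1 - x) * (x * y) ^ n * (x * y) powr s) * indicator {0..} s \<partial>lborel)"
        using True x1 xy by (intro inv_neg_ln_gen) auto
      also have "\<dots> = (\<integral>\<^sup>+s. ?G x y s \<partial>lborel)"
      proof (intro nn_integral_cong)
        fix s :: real
        have "(1 - x) * (x * y) ^ n * (x * y) powr s = ((1 - x) * (x ^ n * x powr s)) * (y ^ n * y powr s)"
          using True by (simp add: powr_mult power_mult_distrib)
        also have "\<dots> = ((1 - x) * x powr (real n + s)) * y powr (real n + s)"
          using True by (simp add: pow_powr_comb)
        finally have eq: "(1 - x) * (x * y) ^ n * (x * y) powr s = ((1 - x) * x powr (real n + s)) * y powr (real n + s)" .
        have "ennreal ((1 - x) * (x * y) ^ n * (x * y) powr s) = ennreal ((1 - x) * x powr (real n + s)) * ennreal (y powr (real n + s))"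
          unfolding eq using True by (intro ennreal_mult) auto
        then show "ennreal ((1 - x) * (x * y) ^ n * (x * y) powr s) * indicator {0..} s = ?G x y s"
          using True by (simp add: A_def B_def)
      qed
      finally show ?thesis .
    next
      case False
      then show ?thesis by (auto simp: f_def A_def B_def)
    qed
  qed
  also have "\<dots> = (\<integral>\<^sup>+x. \<integral>\<^sup>+s. \<integral>\<^sup>+y. ?G x y s \<partial>lborel \<partial>lborel \<partial>lborel)"
  proof (rule nn_integral_cong)
    fix x :: real
    show "(\<integral>\<^sup>+y. \<integral>\<^sup>+s. ?G x y s \<partial>lborel \<partial>lborel) = (\<integral>\<^sup>+s. \<integral>\<^sup>+y. ?G x y s \<partial>lborel \<partial>lborel)"
      by (rule lborel_pair.Fubini'[symmetric]) (unfold A_def B_def, measurable)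
  qed
  also have "\<dots> = (\<integral>\<^sup>+x. \<integral>\<^sup>+s. A x s * ennreal (1 / (real n + s + 1)) * indicator {0..} s \<partial>lborel \<partial>lborel)"
  proof (intro nn_integral_cong)
    fix x s :: real
    show "(\<integral>\<^sup>+y. ?G x y s \<partial>lborel) = A x s * ennreal (1 / (real n + s + 1)) * indicator {0..} s"
    proof (cases "0 \<le> s")
      case True
      have "(\<integral>\<^sup>+y. ?G x y s \<partial>lborel) = A x s * (\<integral>\<^sup>+y. B y s \<partial>lborel)"
        using True by (subst nn_integral_cmult[symmetric]) (auto simp: B_def)
      also have "(\<integral>\<^sup>+y. B y s \<partial>lborel) = ennreal (1 / (real n + s + 1))"
        unfolding B_def using True by (subst powr_moment) auto
      finally show ?thesis using True by simp
    qed simp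
  qed
  also have "\<dots> = (\<integral>\<^sup>+s. \<integral>\<^sup>+x. A x s * ennreal (1 / (real n + s + 1)) * indicator {0..} s \<partial>lborel \<partial>lborel)"
    by (rule lborel_pair.Fubini'[symmetric]) (unfold A_def, measurable)
  also have "\<dots> = (\<integral>\<^sup>+s. ennreal ((1 / (real n + s + 1) - 1 / (real n + s + 2)) * (1 / (real n + s + 1))) * indicator {0..} s \<partial>lborel)"
  proof (intro nn_integral_cong)
    fix s :: real
    show "(\<integral>\<^sup>+x. A x s * ennreal (1 / (real n + s + 1)) * indicator {0..} s \<partial>lborel)
        = ennreal ((1 / (real n + s + 1) - 1 / (real n + s + 2)) * (1 / (real n + s + 1))) * indicator {0..} s"
    proof (cases "0 \<le> s")
      case True
      have "(\<integral>\<^sup>+x. A x s * ennreal (1 / (real n + s + 1)) * indicator {0..} s \<partial>lborel)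
          = (\<integral>\<^sup>+x. A x s \<partial>lborel) * ennreal (1 / (real n + s + 1))"
        using True by (subst nn_integral_multc[symmetric]) (auto simp: A_def)
      also have "(\<integral>\<^sup>+x. A x s \<partial>lborel) = ennreal (1 / (real n + s + 1) - 1 / (real n + s + 2))"
        unfolding A_def using True by (subst powr_moment1[symmetric]) (auto simp: add_ac mult_ac)
      finally have r: "(\<integral>\<^sup>+x. A x s * ennreal (1 / (real n + s + 1)) * indicator {0..} s \<partial>lborel)
          = ennreal (1 / (real n + s + 1) - 1 / (real n + s + 2)) * ennreal (1 / (real n + s + 1))" .
      have nn: "0 \<le> 1 / (real n + s + 1) - 1 / (real n + s + 2)" using True by (simp add: field_simps)
      have bnn: "0 \<le> 1 / (real n + s + 1)" using True by simp
      show ?thesis unfolding r ennreal_mult[OF nn bnn] using True by simp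
    qed simp
  qed
  also have "\<dots> = ennreal (0 - (- (1 / (0 + (real n + 1))) - ln (0 + (real n + 1)) + ln (0 + (real n + 1) + 1)))"
  proof (rule nn_integral_FTC_atLeast[where F="\<lambda>s. - (1 / (s + (real n + 1))) - ln (s + (real n + 1)) + ln (s + (real n + 1) + 1)"])
    show "(\<lambda>s. (1 / (real n + s + 1) - 1 / (real n + s + 2)) * (1 / (real n + s + 1))) \<in> borel_measurable borel" by measurable
    show "DERIV (\<lambda>s. - (1 / (s + (real n + 1))) - ln (s + (real n + 1)) + ln (s + (real n + 1) + 1)) x
         :> (1 / (real n + x + 1) - 1 / (real n + x + 2)) * (1 / (real n + x + 1))"
      if "0 \<le> x" for x
      using dbl_deriv[of "real n + 1" x] that by (simp add: add_ac)
    show "0 \<le> (1 / (real n + x + 1) - 1 / (real n + x + 2)) * (1 / (real n + x + 1))" if "0 \<le> x" for x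
      using that by (simp add: field_simps)
    show "((\<lambda>s. - (1 / (s + (real n + 1))) - ln (s + (real n + 1)) + ln (s + (real n + 1) + 1)) \<longlongrightarrow> 0) at_top"
      by (rule lim_dbl) simp
  qed
  also have "\<dots> = ennreal (1 / (real n + 1) - ln ((real n + 2) / (real n + 1)))"
    by (simp add: ln_div algebra_simps)
  finally show ?thesis unfolding f_def .
qed

lemma cut_bound_pos:
  fixes z :: complex
  assumes "z \<notin> {complex_of_real t | t. t \<ge> 1}"
  shows "\<exists>c>0. \<forall>t\<in>{0..1::real}. c \<le> cmod (1 - of_real t * z)"
proof -
  have "\<exists>x\<in>{0..1::real}. \<forall>y\<in>{0..1}. cmod (1 - of_real x * z) \<le> cmod (1 - of_real y * z)"
    by (rule continuous_attains_inf) (simp, simp, intro continuous_intros)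
  then obtain x where x: "x \<in> {0..1}" "\<And>y. y \<in> {0..1} \<Longrightarrow> cmod (1 - of_real x * z) \<le> cmod (1 - of_real y * z)"
    by blast
  have "1 - of_real x * z \<noteq> 0"
  proof
    assume h: "1 - of_real x * z = 0"
    then have "x \<noteq> 0" by auto
    then have "z = of_real (1 / x)" using h by (simp add: field_simps)
    moreover have "1 / x \<ge> 1" using x \<open>x \<noteq> 0\<close> by (simp add: field_simps)
    ultimately show False using assms by blast
  qed
  then show ?thesis using x by (intro exI[of _ "cmod (1 - of_real x * z)"]) auto
qed

lemma cut_bound_lin:
  fixes z :: complex
  assumes "z \<notin> {complex_of_real t | t. t > 1}"
  shows "\<exists>c>0. \<forall>t\<in>{0..1::real}. c * (1 - t) \<le> cmod (1 - of_real t * z)"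
proof (cases "z = 1")
  case True
  have "1 - t \<le> cmod (1 - of_real t * z)" if "t \<in> {0..1}" for t
  proof -
    have "cmod (1 - of_real t * z) = cmod (complex_of_real (1 - t))" using True by simp
    also have "\<dots> = 1 - t" using that by (simp only: norm_of_real) simp
    finally show ?thesis by simp
  qed
  then show ?thesis by (intro exI[of _ 1]) auto
next
  case False
  have "z \<notin> {complex_of_real t | t. t \<ge> 1}"
  proof
    assume "z \<in> {complex_of_real t | t. t \<ge> 1}"
    then obtain r where r: "z = of_real r" "r \<ge> 1" by blast
    then have "r \<noteq> 1" using False by auto
    then have "r > 1" using r by auto
    then show False using assms r by blast
  qed
  from cut_bound_pos[OF this] obtain c where c: "c > 0" "\<And>t. t \<in> {0..1} \<Longrightarrow> c \<le> cmod (1 - of_real t * z)" by blast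
  show ?thesis
  proof (intro exI[of _ c] conjI ballI)
    fix t :: real assume t: "t \<in> {0..1}"
    have "c * (1 - t) \<le> c" using c t by (simp add: mult_left_le)
    also have "\<dots> \<le> cmod (1 - of_real t * z)" using c t by auto
    finally show "c * (1 - t) \<le> cmod (1 - of_real t * z)" .
  qed (use c in auto)
qed

locale gframe =
  fixes S :: "'a::euclidean_space set" and phi t :: "'a \<Rightarrow> real" and a :: "nat \<Rightarrow> real"
  assumes S_sets[measurable]: "S \<in> sets borel" and S_fin: "emeasure lborel S < \<infinity>"
    and phi_meas[measurable]: "phi \<in> borel_measurable borel"
    and t_meas[measurable]: "t \<in> borel_measurable borel"
    and phi_bnd: "\<And>p. p \<in> S \<Longrightarrow> 0 \<le> phi p \<and> phi p \<le> 1"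
    and t_bnd: "\<And>p. p \<in> S \<Longrightarrow> 0 \<le> t p \<and> t p \<le> 1"
    and t1: "\<And>p. p \<in> S \<Longrightarrow> t p = 1 \<Longrightarrow> phi p = 0"
    and mom: "\<And>n. (\<integral>\<^sup>+p. ennreal (phi p * t p ^ n * indicator S p) \<partial>lborel) = ennreal (a n)"
    and a_nn: "\<And>n. 0 \<le> a n" and a_sum: "summable a"
begin

definition G :: "complex \<Rightarrow> 'a \<Rightarrow> complex" where
  "G z p = of_real (phi p) / (1 - of_real (t p) * z)"

definition F :: "complex \<Rightarrow> complex" where
  "F z = set_lebesgue_integral lborel S (G z)"

lemma G_meas[measurable]: "G z \<in> borel_measurable borel"
  unfolding G_def by measurable

lemma psi_series:
  assumes p: "p \<in> S"
  shows "(\<lambda>n. phi p * t p ^ n) sums (phi p / (1 - t p))"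
proof (cases "t p = 1")
  case True
  then show ?thesis using t1[OF p] by simp
next
  case False
  then have "norm (t p) < 1" using t_bnd[OF p] by auto
  from sums_mult[OF geometric_sums[OF this], of "phi p"] show ?thesis by (simp add: divide_simps)
qed

lemma psi_integrable: "integrable lborel (\<lambda>p. phi p / (1 - t p) * indicator S p)"
proof (rule integrableI_bounded)
  show "(\<lambda>p. phi p / (1 - t p) * indicator S p) \<in> borel_measurable lborel" by measurable
  have "(\<integral>\<^sup>+p. ennreal (norm (phi p / (1 - t p) * indicator S p)) \<partial>lborel)
      = (\<integral>\<^sup>+p. (\<Sum>n. ennreal (phi p * t p ^ n * indicator S p)) \<partial>lborel)"
  proof (rule nn_integral_cong)
    fix p :: 'a
    show "ennreal (norm (phi p / (1 - t p) * indicator S p)) = (\<Sum>n. ennreal (phi p * t p ^ n * indicator S p))"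
    proof (cases "p \<in> S")
      case True
      have nn: "0 \<le> phi p / (1 - t p)" using phi_bnd[OF True] t_bnd[OF True] by auto
      have "(\<Sum>n. ennreal (phi p * t p ^ n)) = ennreal (\<Sum>n. phi p * t p ^ n)"
        using psi_series[OF True] phi_bnd[OF True] t_bnd[OF True]
        by (intro suminf_ennreal2) (auto simp: sums_iff)
      then show ?thesis using True nn sums_unique[OF psi_series[OF True]] by simp
    qed simp
  qed
  also have "\<dots> = (\<Sum>n. (\<integral>\<^sup>+p. ennreal (phi p * t p ^ n * indicator S p) \<partial>lborel))"
    by (rule nn_integral_suminf) measurable
  also have "\<dots> = (\<Sum>n. ennreal (a n))" by (simp add: mom)
  also have "\<dots> = ennreal (\<Sum>n. a n)" using a_nn a_sum by (rule suminf_ennreal2)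
  finally show "(\<integral>\<^sup>+p. ennreal (norm (phi p / (1 - t p) * indicator S p)) \<partial>lborel) < \<infinity>" by simp
qed


lemma setint_bounded:
  fixes g :: "'a \<Rightarrow> 'b::{banach, second_countable_topology}"
  assumes [measurable]: "g \<in> borel_measurable borel" and b: "\<And>p. p \<in> S \<Longrightarrow> norm (g p) \<le> B"
  shows "set_integrable lborel S g"
  unfolding set_integrable_def
  by (rule integrableI_bounded_set_indicator[where B=B]) (use S_fin b in auto)

lemma norm_setint_le:
  fixes g :: "'a \<Rightarrow> 'b::{banach, second_countable_topology}"
  assumes [measurable]: "g \<in> borel_measurable borel" and b: "\<And>p. p \<in> S \<Longrightarrow> norm (g p) \<le> B"
  shows "norm (set_lebesgue_integral lborel S g) \<le> B * measure lborel S"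
proof -
  have i: "integrable lborel (\<lambda>p. indicator S p *\<^sub>R g p)"
    using setint_bounded[OF assms] by (simp add: set_integrable_def)
  have i2: "integrable lborel (\<lambda>p. B * indicator S p :: real)"
    using S_fin by (intro integrable_mult_right integrable_real_indicator) auto
  have "norm (set_lebesgue_integral lborel S g) \<le> (LINT p|lborel. norm (indicator S p *\<^sub>R g p))"
    unfolding set_lebesgue_integral_def by (rule integral_norm_bound)
  also have "\<dots> \<le> (LINT p|lborel. B * indicator S p)"
    using integrable_norm[OF i] i2 b by (intro integral_mono) (auto split: split_indicator)
  also have "\<dots> = B * measure lborel S" by simp
  finally show ?thesis .
qed

lemma G_int:
  assumes z: "z \<notin> {complex_of_real r | r. r > 1}"
  shows "set_integrable lborel S (G z)"
proof -
  obtain c where c: "c > 0" "\<And>r. r \<in> {0..1} \<Longrightarrow> c * (1 - r) \<le> cmod (1 - of_real r * z)"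
    using cut_bound_lin[OF z] by blast
  show ?thesis
    unfolding set_integrable_def
  proof (rule Bochner_Integration.integrable_bound)
    show "integrable lborel (\<lambda>p. phi p / (1 - t p) * indicator S p / c)"
      using psi_integrable by (rule integrable_divide)
    show "(\<lambda>p. indicator S p *\<^sub>R G z p) \<in> borel_measurable lborel" by measurable
    show "AE p in lborel. norm (indicator S p *\<^sub>R G z p) \<le> norm (phi p / (1 - t p) * indicator S p / c)"
    proof (rule AE_I2)
      fix p :: 'a
      show "norm (indicator S p *\<^sub>R G z p) \<le> norm (phi p / (1 - t p) * indicator S p / c)"
      proof (cases "p \<in> S")
        case True
        note ph = phi_bnd[OF True] and tb = t_bnd[OF True]
        show ?thesis
        proof (cases "t p = 1")
          case True
          then show ?thesis using t1[OF \<open>p \<in> S\<close>] by (simp add: G_def)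
        next
          case False
          then have t1': "t p < 1" using tb by auto
          have cc: "c * (1 - t p) \<le> cmod (1 - of_real (t p) * z)" using c(2)[of "t p"] tb by auto
          have pos: "0 < c * (1 - t p)" using c t1' by auto
          have "norm (G z p) = phi p / cmod (1 - of_real (t p) * z)"
            using ph by (simp add: G_def norm_divide norm_of_real)
          also have "\<dots> \<le> phi p / (c * (1 - t p))"
            using ph cc pos by (intro divide_left_mono) (auto intro!: mult_pos_pos)
          also have "\<dots> = norm (phi p / (1 - t p) * indicator S p / c)"
            using ph t1' c True by (simp add: abs_of_nonneg)
          finally show ?thesis using True by simp
        qed
      qed simp
    qed
  qed
qed

lemma mom_int: "integrable lborel (\<lambda>p. phi p * t p ^ n * indicator S p)"
  by (rule integrableI_nonneg) (use phi_bnd t_bnd mom in \<open>auto split: split_indicator\<close>)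

lemma mom_integral: "(LINT p|lborel. phi p * t p ^ n * indicator S p) = a n"
proof -
  have "(LINT p|lborel. phi p * t p ^ n * indicator S p) = enn2real (\<integral>\<^sup>+p. ennreal (phi p * t p ^ n * indicator S p) \<partial>lborel)"
    by (rule integral_eq_nn_integral) (use phi_bnd t_bnd in \<open>auto split: split_indicator\<close>)
  then show ?thesis using mom a_nn by simp
qed

lemma F_sums:
  assumes z: "cmod z \<le> 1"
  shows "(\<lambda>n. z ^ n * of_real (a n)) sums F z"
proof -
  define s where "s = (\<lambda>N p. \<Sum>k<N. of_real (phi p * t p ^ k * indicator S p) * z ^ k :: complex)"
  have int_s: "integral\<^sup>L lborel (s N) = (\<Sum>k<N. z ^ k * of_real (a k))" for N
  proof -
    have "integral\<^sup>L lborel (s N) = (\<Sum>k<N. LINT p|lborel. of_real (phi p * t p ^ k * indicator S p) * z ^ k)"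
      unfolding s_def by (rule Bochner_Integration.integral_sum, rule integrable_mult_left, rule integrable_of_real, rule mom_int)
    also have "\<dots> = (\<Sum>k<N. z ^ k * of_real (a k))"
    proof (intro sum.cong refl)
      fix k
      have "(LINT p|lborel. of_real (phi p * t p ^ k * indicator S p) * z ^ k) = of_real (a k) * z ^ k"
        by (simp only: integral_mult_left_zero integral_complex_of_real mom_integral)
      then show "(LINT p|lborel. of_real (phi p * t p ^ k * indicator S p) * z ^ k) = z ^ k * of_real (a k)"
        by (simp only: mult.commute)
    qed
    finally show ?thesis .
  qed
  have "(\<lambda>N. integral\<^sup>L lborel (s N)) \<longlonglongrightarrow> (LINT p|lborel. indicator S p *\<^sub>R G z p)"
  proof (rule integral_dominated_convergence[where w="\<lambda>p. phi p / (1 - t p) * indicator S p"])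
    show "(\<lambda>p. indicator S p *\<^sub>R G z p) \<in> borel_measurable lborel" by measurable
    show "s N \<in> borel_measurable lborel" for N unfolding s_def by measurable
    show "integrable lborel (\<lambda>p. phi p / (1 - t p) * indicator S p)" by (rule psi_integrable)
    show "AE p in lborel. (\<lambda>N. s N p) \<longlonglongrightarrow> indicator S p *\<^sub>R G z p"
    proof (rule AE_I2)
      fix p :: 'a
      show "(\<lambda>N. s N p) \<longlonglongrightarrow> indicator S p *\<^sub>R G z p"
      proof (cases "p \<in> S \<and> t p \<noteq> 1")
        case True
        then have tb: "0 \<le> t p" "t p < 1" using t_bnd[of p] by auto
        have "norm (of_real (t p) * z) = t p * cmod z" using tb by (simp add: norm_mult norm_of_real)
        also have "\<dots> \<le> t p" using tb z by (simp add: mult_left_le)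
        finally have "norm (of_real (t p) * z) < 1" using tb by linarith
        from sums_mult[OF geometric_sums[OF this], of "of_real (phi p)"]
        have "(\<lambda>k. of_real (phi p) * (of_real (t p) * z) ^ k) sums (of_real (phi p) * (1 / (1 - of_real (t p) * z)))" .
        then have "(\<lambda>N. \<Sum>k<N. of_real (phi p) * (of_real (t p) * z) ^ k) \<longlonglongrightarrow> G z p"
          by (simp add: sums_def G_def)
        moreover have "s N p = (\<Sum>k<N. of_real (phi p) * (of_real (t p) * z) ^ k)" for N
          using True unfolding s_def by (intro sum.cong) (auto simp: power_mult_distrib)
        ultimately show ?thesis using True by simp
      next
        case False
        then have "s N p = 0" for N
          using t1[of p] unfolding s_def by (auto split: split_indicator)
        moreover have "indicator S p *\<^sub>R G z p = 0" using False t1[of p] by (auto simp: G_def split: split_indicator)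
        ultimately show ?thesis by (simp only:) (rule tendsto_const)
      qed
    qed
    show "AE p in lborel. norm (s N p) \<le> phi p / (1 - t p) * indicator S p" for N
    proof (rule AE_I2)
      fix p :: 'a
      show "norm (s N p) \<le> phi p / (1 - t p) * indicator S p"
      proof (cases "p \<in> S")
        case True
        note ph = phi_bnd[OF True] and tb = t_bnd[OF True]
        have "norm (s N p) \<le> (\<Sum>k<N. norm (of_real (phi p * t p ^ k * indicator S p) * z ^ k))"
          unfolding s_def by (rule norm_sum)
        also have "\<dots> \<le> (\<Sum>k<N. phi p * t p ^ k)"
        proof (rule sum_mono)
          fix k assume "k \<in> {..<N}"
          have "norm (z ^ k) \<le> 1" using z by (simp add: norm_power power_le_one)
          have h0: "0 \<le> phi p * t p ^ k * indicator S p" using ph tb by simp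
          have "norm (of_real (phi p * t p ^ k * indicator S p) * z ^ k) = (phi p * t p ^ k * indicator S p) * norm (z ^ k)"
            by (simp only: norm_mult norm_of_real abs_of_nonneg[OF h0])
          also have "\<dots> \<le> (phi p * t p ^ k * indicator S p) * 1"
            by (rule mult_left_mono[OF \<open>norm (z ^ k) \<le> 1\<close> h0])
          finally show "norm (of_real (phi p * t p ^ k * indicator S p) * z ^ k) \<le> phi p * t p ^ k"
            using True by simp
        qed
        also have "\<dots> \<le> (\<Sum>k. phi p * t p ^ k)"
          using psi_series[OF True] ph tb by (intro sum_le_suminf) (auto simp: sums_iff)
        also have "\<dots> = phi p / (1 - t p) * indicator S p"
          using sums_unique[OF psi_series[OF True]] True by simp
        finally show ?thesis .
      qed (simp add: s_def)
    qed
  qed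
  then show ?thesis
    unfolding sums_def F_def set_lebesgue_integral_def int_s[symmetric] .
qed


lemma G_key:
  fixes phi' t' :: real and z w :: complex
  assumes "1 - of_real t' * z \<noteq> 0" "1 - of_real t' * w \<noteq> 0"
  shows "of_real phi' / (1 - of_real t' * z) - of_real phi' / (1 - of_real t' * w)
           - (z - w) * (of_real (phi' * t') / (1 - of_real t' * w) ^ 2)
         = (z - w) ^ 2 * (of_real (phi' * t' ^ 2) / ((1 - of_real t' * z) * (1 - of_real t' * w) ^ 2))"
proof -
  define A where "A = 1 - of_real t' * z"
  define B where "B = 1 - of_real t' * w"
  have "A \<noteq> 0" "B \<noteq> 0" using assms by (auto simp: A_def B_def)
  have d: "B - A = of_real t' * (z - w)" by (simp add: A_def B_def algebra_simps)
  have "of_real phi' / A - of_real phi' / B - (z - w) * (of_real (phi' * t') / B ^ 2)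
        = of_real phi' * (B - A) * B / (A * B ^ 2) - (z - w) * of_real (phi' * t') * A / (A * B ^ 2)"
    using \<open>A \<noteq> 0\<close> \<open>B \<noteq> 0\<close> by (simp add: field_simps power2_eq_square)
  also have "\<dots> = (of_real phi' * of_real t' * (z - w) * B - (z - w) * of_real phi' * of_real t' * A) / (A * B ^ 2)"
    by (simp add: d diff_divide_distrib)
  also have "\<dots> = (z - w) * of_real phi' * of_real t' * (B - A) / (A * B ^ 2)"
    by (simp add: algebra_simps)
  also have "\<dots> = (z - w) ^ 2 * (of_real (phi' * t') * of_real t' / (A * B ^ 2))"
    by (simp add: d power2_eq_square)
  also have "\<dots> = (z - w) ^ 2 * (of_real (phi' * t' ^ 2) / (A * B ^ 2))"
    by (simp add: power2_eq_square)
  finally show ?thesis by (simp add: A_def B_def)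
qed

lemma H_meas[measurable]: "(\<lambda>p. of_real (phi p * t p) / (1 - of_real (t p) * w) ^ 2 :: complex) \<in> borel_measurable borel"
  by measurable

lemma F_deriv:
  assumes w: "w \<notin> {complex_of_real r | r. r \<ge> 1}"
  shows "(F has_field_derivative
           set_lebesgue_integral lborel S (\<lambda>p. of_real (phi p * t p) / (1 - of_real (t p) * w) ^ 2)) (at w)"
proof -
  obtain c where c: "c > 0" "\<And>r. r \<in> {0..1} \<Longrightarrow> c \<le> cmod (1 - of_real r * w)"
    using cut_bound_pos[OF w] by blast
  define D where "D = set_lebesgue_integral lborel S (\<lambda>p. of_real (phi p * t p) / (1 - of_real (t p) * w) ^ 2)"
  define K where "K = (\<lambda>z p. of_real (phi p * t p ^ 2) / ((1 - of_real (t p) * z) * (1 - of_real (t p) * w) ^ 2) :: complex)"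
  define M where "M = 2 / c ^ 3 * measure lborel S"
  have near: "c / 2 \<le> cmod (1 - of_real r * z)" if r: "r \<in> {0..1}" and zw: "cmod (z - w) < c / 2" for r z
  proof -
    have "cmod (1 - of_real r * w) \<le> cmod (1 - of_real r * z) + cmod (of_real r * (z - w))"
    proof -
      have eq: "1 - of_real r * w = (1 - of_real r * z) + of_real r * (z - w)" by (simp add: algebra_simps)
      from norm_triangle_ineq[of "1 - of_real r * z" "of_real r * (z - w)"] show ?thesis
        by (simp only: eq[symmetric])
    qed
    moreover have "cmod (of_real r * (z - w)) \<le> cmod (z - w)"
      using r by (simp add: norm_mult norm_of_real mult_left_le_one_le)
    ultimately show ?thesis using c(2)[OF r] zw by linarith
  qed
  have key: "(F z - F w) / (z - w) - D = (z - w) * set_lebesgue_integral lborel S (K z)"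
    if zw: "cmod (z - w) < c / 2" "z \<noteq> w" for z
  proof -
    have A: "c / 2 \<le> cmod (1 - of_real (t p) * z)" if "p \<in> S" for p
      using near[OF _ zw(1), of "t p"] t_bnd[OF that] by auto
    have B: "c \<le> cmod (1 - of_real (t p) * w)" if "p \<in> S" for p
      using c(2)[of "t p"] t_bnd[OF that] by auto
    have iG: "set_integrable lborel S (G y)" if "y = z \<or> y = w" for y
    proof (rule setint_bounded[OF G_meas, where B="2 / c"])
      fix p assume p: "p \<in> S"
      have "c / 2 \<le> cmod (1 - of_real (t p) * y)" using that A[OF p] B[OF p] c by auto
      then have "phi p / cmod (1 - of_real (t p) * y) \<le> 1 / (c / 2)"
        using phi_bnd[OF p] c by (intro frac_le) auto
      then show "norm (G y p) \<le> 2 / c" using phi_bnd[OF p] by (simp add: G_def norm_divide norm_of_real)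
    qed
    have iH: "set_integrable lborel S (\<lambda>p. of_real (phi p * t p) / (1 - of_real (t p) * w) ^ 2)"
    proof (rule setint_bounded[OF H_meas, where B="1 / c ^ 2"])
      fix p assume p: "p \<in> S"
      have "phi p * t p \<le> 1" using phi_bnd[OF p] t_bnd[OF p] by (simp add: mult_le_one)
      moreover have "c ^ 2 \<le> cmod (1 - of_real (t p) * w) ^ 2" using B[OF p] c by (intro power_mono) auto
      ultimately have "(phi p * t p) / cmod (1 - of_real (t p) * w) ^ 2 \<le> 1 / c ^ 2"
        using phi_bnd[OF p] t_bnd[OF p] c by (intro frac_le) auto
      moreover have nn: "0 \<le> phi p * t p" using phi_bnd[OF p] t_bnd[OF p] by simp
      ultimately show "norm (of_real (phi p * t p) / (1 - of_real (t p) * w) ^ 2 :: complex) \<le> 1 / c ^ 2"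
        by (simp only: norm_divide norm_power norm_of_real abs_of_nonneg[OF nn])
    qed
    have eq: "set_lebesgue_integral lborel S (\<lambda>p. G z p - G w p - (z - w) * (of_real (phi p * t p) / (1 - of_real (t p) * w) ^ 2))
            = set_lebesgue_integral lborel S (\<lambda>p. (z - w) ^ 2 * K z p)"
    proof -
      have pw: "G z p - G w p - (z - w) * (of_real (phi p * t p) / (1 - of_real (t p) * w) ^ 2) = (z - w) ^ 2 * K z p"
        if p: "p \<in> S" for p
      proof -
        have "1 - of_real (t p) * z \<noteq> 0" using A[OF p] c by auto
        moreover have "1 - of_real (t p) * w \<noteq> 0" using B[OF p] c by auto
        ultimately show ?thesis unfolding G_def K_def by (rule G_key)
      qed
      show ?thesis by (rule set_lebesgue_integral_cong) (simp, blast intro: pw)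
    qed
    define H where "H = (\<lambda>p. of_real (phi p * t p) / (1 - of_real (t p) * w) ^ 2 :: complex)"
    have iGd: "set_integrable lborel S (\<lambda>p. G z p - G w p)"
      by (rule set_integral_diff(1)[OF iG[of z] iG[of w]]) auto
    have iHm: "set_integrable lborel S (\<lambda>p. (z - w) * H p)"
      unfolding H_def by (rule set_integrable_mult_right[OF iH])
    have "set_lebesgue_integral lborel S (\<lambda>p. G z p - G w p - (z - w) * H p)
          = set_lebesgue_integral lborel S (\<lambda>p. G z p - G w p) - set_lebesgue_integral lborel S (\<lambda>p. (z - w) * H p)"
      by (rule set_integral_diff(2)[OF iGd iHm])
    also have "set_lebesgue_integral lborel S (\<lambda>p. G z p - G w p) = F z - F w"
      unfolding F_def by (rule set_integral_diff(2)[OF iG[of z] iG[of w]]) auto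
    also have "set_lebesgue_integral lborel S (\<lambda>p. (z - w) * H p) = (z - w) * D"
      unfolding D_def H_def by (rule set_integral_mult_right)
    finally have e1: "set_lebesgue_integral lborel S (\<lambda>p. G z p - G w p - (z - w) * H p) = F z - F w - (z - w) * D" .
    have e2: "set_lebesgue_integral lborel S (\<lambda>p. (z - w) ^ 2 * K z p) = (z - w) ^ 2 * set_lebesgue_integral lborel S (K z)"
      by (rule set_integral_mult_right)
    have e3: "F z - F w - (z - w) * D = (z - w) ^ 2 * set_lebesgue_integral lborel S (K z)"
      using eq e1 e2 unfolding H_def by simp
    have "(F z - F w) / (z - w) - D = (F z - F w - (z - w) * D) / (z - w)"
      using zw(2) by (simp add: diff_divide_distrib)
    also have "\<dots> = (z - w) ^ 2 * set_lebesgue_integral lborel S (K z) / (z - w)" by (simp only: e3)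
    also have "\<dots> = (z - w) * set_lebesgue_integral lborel S (K z)"
      using zw(2) by (simp add: power2_eq_square)
    finally show ?thesis .
  qed
  have bound: "norm (set_lebesgue_integral lborel S (K z)) \<le> M" if zw: "cmod (z - w) < c / 2" for z
    unfolding M_def
  proof (rule norm_setint_le)
    show "K z \<in> borel_measurable borel" unfolding K_def by measurable
    fix p assume p: "p \<in> S"
    have A: "c / 2 \<le> cmod (1 - of_real (t p) * z)" using near[OF _ zw, of "t p"] t_bnd[OF p] by auto
    have B: "c \<le> cmod (1 - of_real (t p) * w)" using c(2)[of "t p"] t_bnd[OF p] by auto
    have "phi p * t p ^ 2 \<le> 1" using phi_bnd[OF p] t_bnd[OF p] by (simp add: mult_le_one power_le_one)
    moreover have "c / 2 * c ^ 2 \<le> cmod (1 - of_real (t p) * z) * cmod (1 - of_real (t p) * w) ^ 2"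
      using A B c by (intro mult_mono power_mono) auto
    moreover have "0 < c / 2 * c ^ 2" using c by simp
    ultimately have "(phi p * t p ^ 2) / (cmod (1 - of_real (t p) * z) * cmod (1 - of_real (t p) * w) ^ 2) \<le> 1 / (c / 2 * c ^ 2)"
      using phi_bnd[OF p] t_bnd[OF p] by (intro frac_le) auto
    also have "\<dots> = 2 / c ^ 3" by (simp add: power3_eq_cube power2_eq_square)
    finally show "norm (K z p) \<le> 2 / c ^ 3"
      using phi_bnd[OF p] t_bnd[OF p] by (simp add: K_def norm_divide norm_mult norm_of_real norm_power)
  qed
  have "((\<lambda>z. (F z - F w) / (z - w) - D) \<longlongrightarrow> 0) (at w)"
  proof (rule Lim_null_comparison)
    show "eventually (\<lambda>z. norm ((F z - F w) / (z - w) - D) \<le> cmod (z - w) * M) (at w)"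
      unfolding eventually_at
    proof (intro exI[of _ "c / 2"] conjI ballI impI)
      show "0 < c / 2" using c by simp
      fix z assume "z \<noteq> w \<and> dist z w < c / 2"
      then have zw: "cmod (z - w) < c / 2" "z \<noteq> w" by (auto simp: dist_norm)
      show "norm ((F z - F w) / (z - w) - D) \<le> cmod (z - w) * M"
        unfolding key[OF zw] norm_mult using bound[OF zw(1)] by (intro mult_left_mono) auto
    qed
    have "((\<lambda>z. cmod (z - w)) \<longlongrightarrow> 0) (at w)"
      using tendsto_norm[OF LIM_zero[OF tendsto_ident_at[of w UNIV]]] by simp
    then show "((\<lambda>z. cmod (z - w) * M) \<longlongrightarrow> 0) (at w)"
      by (rule tendsto_mult_left_zero)
  qed
  then have "((\<lambda>z. (F z - F w) / (z - w)) \<longlongrightarrow> D) (at w)" by (rule LIM_zero_cancel)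
  then show ?thesis unfolding D_def[symmetric] has_field_derivative_iff .
qed

lemma F_holo: "F holomorphic_on (- {complex_of_real r | r. r \<ge> 1})"
  unfolding holomorphic_on_def
proof
  fix w assume "w \<in> - {complex_of_real r | r. r \<ge> 1}"
  then have "w \<notin> {complex_of_real r | r. r \<ge> 1}" by simp
  note F_deriv[OF this]
  then show "F field_differentiable at w within - {complex_of_real r | r. r \<ge> 1}"
    unfolding field_differentiable_def by (blast intro: has_field_derivative_at_within)
qed

end

definition gam_a :: "nat \<Rightarrow> real" where
  "gam_a n = 1 / (real n + 1) - ln ((real n + 2) / (real n + 1))"

lemma gam_a_bounds: "0 \<le> gam_a n \<and> gam_a n \<le> inverse (real (Suc n) ^ 2)"
proof -
  have p: "0 < real n + 1" by simp
  have "ln ((real n + 2) / (real n + 1)) = ln (1 + 1 / (real n + 1))"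
    using p by (simp add: field_simps)
  also have "\<dots> \<le> 1 / (real n + 1)" by (rule ln_add_one_self_le_self) simp
  finally have up: "ln ((real n + 2) / (real n + 1)) \<le> 1 / (real n + 1)" .
  have "ln ((real n + 1) / (real n + 2)) \<le> (real n + 1) / (real n + 2) - 1"
    by (rule ln_le_minus_one) simp
  moreover have "ln ((real n + 1) / (real n + 2)) = - ln ((real n + 2) / (real n + 1))"
    by (simp add: ln_div)
  moreover have "(real n + 1) / (real n + 2) - 1 = - (1 / (real n + 2))" by (simp add: field_simps)
  ultimately have lo: "1 / (real n + 2) \<le> ln ((real n + 2) / (real n + 1))" by linarith
  have "gam_a n \<le> 1 / (real n + 1) - 1 / (real n + 2)" using lo by (simp add: gam_a_def)
  also have "\<dots> = 1 / ((real n + 1) * (real n + 2))" by (simp add: field_simps)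
  also have "\<dots> \<le> 1 / ((real n + 1) * (real n + 1))" by (intro divide_left_mono mult_mono) auto
  also have "\<dots> = inverse (real (Suc n) ^ 2)" by (simp add: power2_eq_square field_simps)
  finally show ?thesis using up by (simp add: gam_a_def)
qed

lemma gam_a_summable: "summable gam_a"
proof (rule summable_comparison_test)
  show "\<exists>N. \<forall>n\<ge>N. norm (gam_a n) \<le> inverse (real (Suc n) ^ 2)"
    using gam_a_bounds by auto
  have "summable (\<lambda>n. inverse (real n ^ 2))" by (rule inverse_power_summable) simp
  then show "summable (\<lambda>n. inverse (real (Suc n) ^ 2))"
    using summable_Suc_iff[of "\<lambda>n. inverse (real n ^ 2)"] by simp
qed

lemma gamma_term_eq: "gamma_term z (Suc n) = z ^ n * of_real (gam_a n)"
  by (simp add: gamma_term_def gam_a_def add_ac)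

definition phiS :: "real \<Rightarrow> real" where "phiS x = (1 - x + ln x) / ln x"
definition phiD :: "real \<times> real \<Rightarrow> real" where "phiD p = (1 - fst p) / (- ln (fst p * snd p))"

lemma phiS_bnd: "x \<in> {0..1} \<Longrightarrow> 0 \<le> phiS x \<and> phiS x \<le> 1"
proof -
  assume x: "x \<in> {0..1}"
  show ?thesis
  proof (cases "x = 0 \<or> x = 1")
    case True then show ?thesis by (auto simp: phiS_def)
  next
    case False
    then have x': "0 < x" "x < 1" using x by auto
    have l: "ln x < 0" using x' by simp
    have n: "1 - x + ln x \<le> 0" using ln_le_minus_one[OF x'(1)] by simp
    have "0 \<le> (1 - x + ln x) / ln x" using n l by (simp add: divide_nonpos_neg)
    moreover have "(1 - x + ln x) / ln x \<le> 1" using l x' by (simp add: divide_le_eq)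
    ultimately show ?thesis by (simp add: phiS_def)
  qed
qed

lemma phiD_bnd: "p \<in> {0..1} \<times> {0..1} \<Longrightarrow> 0 \<le> phiD p \<and> phiD p \<le> 1"
proof -
  assume p: "p \<in> {0..1} \<times> {0..1}"
  obtain x y where xy: "p = (x, y)" by (cases p)
  have x: "0 \<le> x" "x \<le> 1" and y: "0 \<le> y" "y \<le> 1" using p xy by auto
  show ?thesis
  proof (cases "x * y = 0 \<or> x = 1")
    case True then show ?thesis by (auto simp: phiD_def xy)
  next
    case False
    then have u: "0 < x * y" "x < 1" using x y by (auto simp: zero_less_mult_iff order_le_less)
    have "x * y \<le> x" using x y by (simp add: mult_left_le)
    then have u1: "x * y < 1" using u by linarith
    have l: "- ln (x * y) \<ge> 1 - x * y" using ln_le_minus_one[OF u(1)] by simp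
    have "1 - x * y \<ge> 1 - x" using x y by (simp add: mult_left_le)
    then have "1 - x \<le> - ln (x * y)" using l by linarith
    moreover have L: "0 < - ln (x * y)" using u u1 by simp
    ultimately have h2: "(1 - x) / (- ln (x * y)) \<le> 1" by (simp only: divide_le_eq_1_pos)
    have h1: "0 \<le> (1 - x) / (- ln (x * y))" using L x by (intro divide_nonneg_pos) auto
    show ?thesis unfolding phiD_def xy fst_conv snd_conv using h1 h2 by blast
  qed
qed

lemma sgl_mom: "(\<integral>\<^sup>+x. ennreal (phiS x * x ^ n * indicator {0..1} x) \<partial>lborel) = ennreal (gam_a n)"
proof -
  have eqAE: "AE x in lborel. ennreal (x ^ n * indicator {0..1} x)
      = ennreal (phiS x * x ^ n * indicator {0..1} x) + ennreal (x ^ n * (1 - x) / (- ln x) * indicator {0..1} x)"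
  proof -
    have "AE x in lborel. x \<noteq> (0::real)" by (rule AE_lborel_singleton)
    moreover have "AE x in lborel. x \<noteq> (1::real)" by (rule AE_lborel_singleton)
    ultimately show ?thesis
    proof eventually_elim
      case (elim x)
      show ?case
      proof (cases "x \<in> {0..1}")
        case True
        then have x': "0 < x" "x < 1" using elim by auto
        have l: "ln x < 0" using x' by simp
        have nn1: "0 \<le> phiS x * x ^ n" using phiS_bnd[OF True] x' by simp
        have nn2: "0 \<le> x ^ n * (1 - x) / (- ln x)" using x' l by (intro divide_nonneg_pos mult_nonneg_nonneg) auto
        have "x ^ n = phiS x * x ^ n + x ^ n * (1 - x) / (- ln x)"
          using l by (simp add: phiS_def field_simps)
        then show ?thesis using True nn1 nn2 by (simp add: ennreal_plus[symmetric] del: ennreal_plus)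
      qed simp
    qed
  qed
  have "(\<integral>\<^sup>+x. ennreal (x ^ n * indicator {0..1} x) \<partial>lborel) = (\<integral>\<^sup>+x. ennreal (x powr real n * indicator {0..1} x) \<partial>lborel)"
  proof (rule nn_integral_cong_AE)
    show "AE x in lborel. ennreal (x ^ n * indicator {0..1} x) = ennreal (x powr real n * indicator {0..1} x)"
      using AE_lborel_singleton[of 0] by eventually_elim (auto simp: powr_realpow split: split_indicator)
  qed
  also have "\<dots> = ennreal (1 / (real n + 1))" by (rule powr_moment) simp
  finally have t: "(\<integral>\<^sup>+x. ennreal (x ^ n * indicator {0..1} x) \<partial>lborel) = ennreal (1 / (real n + 1))" .
  have "(\<integral>\<^sup>+x. ennreal (x ^ n * indicator {0..1} x) \<partial>lborel)
      = (\<integral>\<^sup>+x. ennreal (phiS x * x ^ n * indicator {0..1} x) \<partial>lborel) + (\<integral>\<^sup>+x. ennreal (x ^ n * (1 - x) / (- ln x) * indicator {0..1} x) \<partial>lborel)"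
  proof -
    have m1: "(\<lambda>x. ennreal (phiS x * x ^ n * indicator {0..1} x)) \<in> borel_measurable lborel"
      unfolding phiS_def by measurable
    have m2: "(\<lambda>x. ennreal (x ^ n * (1 - x) / (- ln x) * indicator {0..1} x)) \<in> borel_measurable lborel"
      by measurable
    show ?thesis by (subst nn_integral_cong_AE[OF eqAE]) (rule nn_integral_add[OF m1 m2])
  qed
  then have "ennreal (1 / (real n + 1)) = (\<integral>\<^sup>+x. ennreal (phiS x * x ^ n * indicator {0..1} x) \<partial>lborel) + ennreal (ln ((real n + 2) / (real n + 1)))"
    by (simp only: t sgl_moment_aux)
  then have "(\<integral>\<^sup>+x. ennreal (phiS x * x ^ n * indicator {0..1} x) \<partial>lborel) = ennreal (1 / (real n + 1)) - ennreal (ln ((real n + 2) / (real n + 1)))"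
    by simp
  also have "\<dots> = ennreal (gam_a n)"
    by (subst ennreal_minus) (auto simp: gam_a_def)
  finally show ?thesis .
qed

interpretation sgl: gframe "{0..1::real}" phiS "\<lambda>x. x" gam_a
proof
  show "{0..1::real} \<in> sets borel" by simp
  show "emeasure lborel {0..1::real} < \<infinity>" by simp
  show "phiS \<in> borel_measurable borel" unfolding phiS_def by measurable
  show "(\<lambda>x::real. x) \<in> borel_measurable borel" by simp
  show "p \<in> {0..1} \<Longrightarrow> 0 \<le> phiS p \<and> phiS p \<le> 1" for p by (rule phiS_bnd)
  show "p \<in> {0..1} \<Longrightarrow> 0 \<le> p \<and> p \<le> (1::real)" for p by simp
  show "p \<in> {0..1} \<Longrightarrow> p = 1 \<Longrightarrow> phiS p = 0" for p by (simp add: phiS_def)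
  show "(\<integral>\<^sup>+p. ennreal (phiS p * p ^ n * indicator {0..1} p) \<partial>lborel) = ennreal (gam_a n)" for n
    by (rule sgl_mom)
  show "0 \<le> gam_a n" for n using gam_a_bounds by blast
  show "summable gam_a" by (rule gam_a_summable)
qed

interpretation dbl: gframe "{0..1::real} \<times> {0..1::real}" phiD "\<lambda>p. fst p * snd p" gam_a
proof
  show "{0..1::real} \<times> {0..1::real} \<in> sets borel"
    by (intro borel_closed closed_Times) auto
  show "emeasure lborel ({0..1::real} \<times> {0..1::real}) < \<infinity>"
    by (intro emeasure_bounded_finite bounded_Times) auto
  have mt: "(\<lambda>p::real\<times>real. fst p * snd p) \<in> borel_measurable borel"
    by (rule borel_measurable_continuous_onI) (intro continuous_intros)
  have m1: "(\<lambda>p::real\<times>real. 1 - fst p) \<in> borel_measurable borel"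
    by (rule borel_measurable_continuous_onI) (intro continuous_intros)
  show "phiD \<in> borel_measurable borel" unfolding phiD_def
    by (rule borel_measurable_divide[OF m1 borel_measurable_uminus[OF borel_measurable_ln[OF mt]]])
  show "(\<lambda>p::real\<times>real. fst p * snd p) \<in> borel_measurable borel" by (rule mt)
  show "p \<in> {0..1} \<times> {0..1} \<Longrightarrow> 0 \<le> phiD p \<and> phiD p \<le> 1" for p by (rule phiD_bnd)
  show "p \<in> {0..1} \<times> {0..1} \<Longrightarrow> 0 \<le> fst p * snd p \<and> fst p * snd p \<le> (1::real)" for p
    by (auto intro: mult_le_one)
  show "p \<in> {0..1} \<times> {0..1} \<Longrightarrow> fst p * snd p = 1 \<Longrightarrow> phiD p = 0" for p
  proof -
    assume p: "p \<in> {0..1} \<times> {0..1}" "fst p * snd p = 1"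
    have b: "0 \<le> fst p" "fst p \<le> 1" "0 \<le> snd p" "snd p \<le> 1" using p(1) by (auto simp: mem_Times_iff)
    have "fst p * snd p \<le> fst p" using b by (simp add: mult_left_le)
    then have "fst p = 1" using p(2) b by linarith
    then show "phiD p = 0" by (simp add: phiD_def)
  qed
  show "(\<integral>\<^sup>+p. ennreal (phiD p * (fst p * snd p) ^ n * indicator ({0..1} \<times> {0..1}) p) \<partial>lborel) = ennreal (gam_a n)" for n
    unfolding phiD_def gam_a_def by (rule dbl_moment_aux)
  show "0 \<le> gam_a n" for n using gam_a_bounds by blast
  show "summable gam_a" by (rule gam_a_summable)
qed

lemma dbl_integrand_eq: "dbl_integrand z = dbl.G z"
  by (auto simp: fun_eq_iff dbl_integrand_def dbl.G_def phiD_def)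

lemma sgl_integrand_eq: "sgl_integrand z = sgl.G z"
  by (auto simp: fun_eq_iff sgl_integrand_def sgl.G_def phiS_def)

lemma dbl_integral_eq: "dbl_integral = dbl.F"
  by (simp add: fun_eq_iff dbl_integral_def dbl.F_def dbl_integrand_eq)

lemma sgl_integral_eq: "sgl_integral = sgl.F"
  by (simp add: fun_eq_iff sgl_integral_def sgl.F_def sgl_integrand_eq)

theorem theorem6:
  shows "(\<forall>z. cmod z \<le> 1 \<longrightarrow>
           summable (\<lambda>n. gamma_term z (Suc n)) \<and>
           gen_gamma z = dbl_integral z \<and> dbl_integral z = sgl_integral z) \<and>
         (\<forall>z. z \<notin> {complex_of_real t | t. t > 1} \<longrightarrow>
           set_integrable lborel ({0..1} \<times> {0..1}) (dbl_integrand z) \<and>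
           set_integrable lborel {0..1} (sgl_integrand z)) \<and>
         dbl_integral holomorphic_on (- {complex_of_real t | t. t \<ge> 1}) \<and>
         sgl_integral holomorphic_on (- {complex_of_real t | t. t \<ge> 1})"
proof (intro conjI allI impI)
  fix z :: complex assume z: "cmod z \<le> 1"
  have s1: "(\<lambda>n. gamma_term z (Suc n)) sums dbl.F z" using dbl.F_sums[OF z] by (simp add: gamma_term_eq)
  have s2: "(\<lambda>n. gamma_term z (Suc n)) sums sgl.F z" using sgl.F_sums[OF z] by (simp add: gamma_term_eq)
  show "summable (\<lambda>n. gamma_term z (Suc n))" using s1 by (rule sums_summable)
  show "gen_gamma z = dbl_integral z" unfolding gen_gamma_def dbl_integral_eq using s1 by (simp add: sums_iff)
  show "dbl_integral z = sgl_integral z" unfolding dbl_integral_eq sgl_integral_eq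
    using sums_unique2[OF s1 s2] .
next
  fix z :: complex assume z: "z \<notin> {complex_of_real t | t. t > 1}"
  show "set_integrable lborel ({0..1} \<times> {0..1}) (dbl_integrand z)"
    unfolding dbl_integrand_eq by (rule dbl.G_int[OF z])
  show "set_integrable lborel {0..1} (sgl_integrand z)"
    unfolding sgl_integrand_eq by (rule sgl.G_int[OF z])
next
  show "dbl_integral holomorphic_on (- {complex_of_real t | t. t \<ge> 1})"
    unfolding dbl_integral_eq by (rule dbl.F_holo)
  show "sgl_integral holomorphic_on (- {complex_of_real t | t. t \<ge> 1})"
    unfolding sgl_integral_eq by (rule sgl.F_holo)
qed

end
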